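(* Let $k$ be a field of characteristic $p\ge5$ and $U_k=\operatorname{Spec}k[e_2,e_4,e_6,(e_4^3-e_6^2)^{-1}]$. Then $R^p\in H^0(U_k,\mathcal{T}_{U_k})$ is not of the form $g\cdot R$ for any $g\in H^0(U_k,\mathcal{O}_{U_k})$; that is, the $p$-curvature of the foliation generated by $R$ on $U_k$ is nonzero.
   Context: $R = \frac{e_2^2-e_4}{12}\frac{\partial}{\partial e_2} + \frac{e_2e_4-e_6}{3}\frac{\partial}{\partial e_4} + \frac{e_2e_6-e_4^2}{2}\frac{\partial}{\partial e_6}$ is the Ramanujan vector field, and $R^p$ is its $p$-fold composite as a derivation (again a derivation in characteristic $p$). *)

theory Defs
  imports Main "HOL-Library.Poly_Mapping"
begin

datatype var = E2 | E4 | E6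

text \<open>The polynomial ring k[e2,e4,e6]: finitely supported maps from monomials
  (finitely supported exponent vectors) to coefficients.\<close>
type_synonym 'k poly3 = "(var \<Rightarrow>\<^sub>0 nat) \<Rightarrow>\<^sub>0 'k"

definition const3 :: "'k::comm_ring_1 \<Rightarrow> 'k poly3" where
  "const3 c = Poly_Mapping.single 0 c"

definition Var3 :: "var \<Rightarrow> 'k::comm_ring_1 poly3" where
  "Var3 v = Poly_Mapping.single (Poly_Mapping.single v 1) 1"

definition pderiv3 :: "var \<Rightarrow> 'k::comm_ring_1 poly3 \<Rightarrow> 'k poly3" where
  "pderiv3 v f = sum (\<lambda>m :: var \<Rightarrow>\<^sub>0 nat.
      Poly_Mapping.single (m - Poly_Mapping.single v 1)
        (of_nat (Poly_Mapping.lookup m v) * Poly_Mapping.lookup f m)) (Poly_Mapping.keys f)"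

definition ramanujan :: "'k::field poly3 \<Rightarrow> 'k poly3" where
  "ramanujan f =
      const3 (1/12) * (Var3 E2 ^ 2 - Var3 E4) * pderiv3 E2 f
    + const3 (1/3) * (Var3 E2 * Var3 E4 - Var3 E6) * pderiv3 E4 f
    + const3 (1/2) * (Var3 E2 * Var3 E6 - Var3 E4 ^ 2) * pderiv3 E6 f"

definition disc3 :: "'k::comm_ring_1 poly3" where
  "disc3 = Var3 E4 ^ 3 - Var3 E6 ^ 2"

text \<open>The ring of global functions on U_k, i.e. k[e2,e4,e6][1/disc3]:
  a pair (f, n) represents f / disc3^n.\<close>
type_synonym 'k locfun = "'k poly3 \<times> nat"

definition loc_eq :: "'k::comm_ring_1 locfun \<Rightarrow> 'k locfun \<Rightarrow> bool" where
  "loc_eq a b = (fst a * disc3 ^ snd b = fst b * disc3 ^ snd a)"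

definition loc_mul :: "'k::comm_ring_1 locfun \<Rightarrow> 'k locfun \<Rightarrow> 'k locfun" where
  "loc_mul a b = (fst a * fst b, snd a + snd b)"

text \<open>The (unique) extension of R to the localization, by the quotient rule.\<close>
definition ramanujan_loc :: "'k::field locfun \<Rightarrow> 'k locfun" where
  "ramanujan_loc a =
     (ramanujan (fst a) * disc3 - of_nat (snd a) * fst a * ramanujan disc3, Suc (snd a))"

end

theory Submission
  imports Defs
begin

fun var_idx :: "var \<Rightarrow> nat" where
  "var_idx E2 = 0" | "var_idx E4 = 1" | "var_idx E6 = 2"

lemma var_idx_inj: "var_idx x = var_idx y \<Longrightarrow> x = y"
  by (cases x; cases y; simp)

instantiation var :: linorder
begin
definition less_eq_var :: "var \<Rightarrow> var \<Rightarrow> bool" where "less_eq_var x y = (var_idx x \<le> var_idx y)"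
definition less_var :: "var \<Rightarrow> var \<Rightarrow> bool" where "less_var x y = (var_idx x < var_idx y)"
instance
  by standard (auto simp: less_eq_var_def less_var_def intro: var_idx_inj)
end

lemma pm_induct [case_names zero add]:
  fixes f :: "'a \<Rightarrow>\<^sub>0 'b::comm_monoid_add"
  assumes "P 0" and "\<And>f a b. P f \<Longrightarrow> P (f + Poly_Mapping.single a b)"
  shows "P f"
proof (induction f rule: Poly_Mapping.update_induct)
  case const then show ?case using assms(1) .
next
  case (update f a b)
  have "Poly_Mapping.update a b f = f + Poly_Mapping.single a b"
    using update(1)
    by (intro poly_mapping_eqI) (auto simp: Poly_Mapping.lookup_update lookup_add lookup_single in_keys_iff when_def)
  then show ?case using assms(2)[OF update(3)] by simp
qed

lemma const3_add: "const3 (a + b) = const3 a + const3 b"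
  by (simp add: const3_def single_add)
lemma const3_mult: "const3 (a * b) = const3 a * (const3 b :: 'k::comm_ring_1 poly3)"
  by (simp add: const3_def mult_single)
lemma const3_0 [simp]: "const3 0 = 0"
  by (simp add: const3_def)
lemma const3_1 [simp]: "const3 1 = 1"
  by (simp add: const3_def)
lemma const3_diff: "const3 (a - b) = const3 a - const3 b"
  by (simp add: const3_def single_diff)
lemma const3_minus: "const3 (- a) = - const3 a"
  by (simp add: const3_def single_uminus)
lemma const3_of_nat: "const3 (of_nat n) = of_nat n"
  by (simp add: const3_def)
lemma const3_numeral: "const3 (numeral n) = numeral n"
  by (simp add: const3_def)
lemma single_const3: "Poly_Mapping.single m c = const3 c * Poly_Mapping.single m (1::'k::comm_ring_1)"
  by (simp add: const3_def mult_single)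

lemma Var3_pow: "Poly_Mapping.single (Poly_Mapping.single v n) (1::'k::comm_ring_1) = Var3 v ^ n"
proof (induction n)
  case 0 then show ?case by simp
next
  case (Suc n)
  have "Poly_Mapping.single (Poly_Mapping.single v (Suc n)) (1::'k)
      = Poly_Mapping.single (Poly_Mapping.single v n) 1 * Var3 v"
    by (simp add: Var3_def mult_single single_add[symmetric])
  then show ?case using Suc by simp
qed

lemma poly3_gen:
  fixes P :: "'k::comm_ring_1 poly3 \<Rightarrow> bool"
  assumes const: "\<And>c. P (const3 c)" and var: "\<And>v. P (Var3 v)"
    and add: "\<And>f g. P f \<Longrightarrow> P g \<Longrightarrow> P (f + g)"
    and mult: "\<And>f g. P f \<Longrightarrow> P g \<Longrightarrow> P (f * g)"
  shows "P f"
proof -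
  have pow: "P (Var3 v ^ n)" for v n
    by (induction n) (use const[of 1] var mult in auto)
  have mono: "P (Poly_Mapping.single m 1)" for m :: "var \<Rightarrow>\<^sub>0 nat"
  proof (induction m rule: pm_induct)
    case zero then show ?case using const[of 1] by (simp add: const3_def)
  next
    case (add f a b)
    have "Poly_Mapping.single (f + Poly_Mapping.single a b) (1::'k)
        = Poly_Mapping.single f 1 * Var3 a ^ b"
      by (simp add: mult_single Var3_pow[symmetric])
    then show ?case using add mult pow by simp
  qed
  show ?thesis
  proof (induction f rule: pm_induct)
    case zero then show ?case using const[of 0] by simp
  next
    case (add f a b)
    then show ?case using mult[OF const mono] add.IH assms(3) single_const3 by metis
  qed
qed

section \<open>Partial derivatives\<close>

lemma pderiv3_superset:
  assumes "finite S" "Poly_Mapping.keys f \<subseteq> S"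
  shows "pderiv3 v f = (\<Sum>m\<in>S. Poly_Mapping.single (m - Poly_Mapping.single v 1)
        (of_nat (Poly_Mapping.lookup m v) * Poly_Mapping.lookup f m))"
  unfolding pderiv3_def
  by (rule sum.mono_neutral_left) (use assms in \<open>auto simp: in_keys_iff\<close>)

lemma pderiv3_add: "pderiv3 v (f + g) = pderiv3 v f + pderiv3 v g"
proof -
  let ?S = "Poly_Mapping.keys f \<union> Poly_Mapping.keys g"
  have "Poly_Mapping.keys (f + g) \<subseteq> ?S" by (rule keys_add)
  then show ?thesis
    by (simp add: pderiv3_superset[of ?S] lookup_add distrib_left single_add sum.distrib)
qed

lemma pderiv3_zero [simp]: "pderiv3 v 0 = 0"
  by (simp add: pderiv3_def)

lemma pderiv3_single:
  "pderiv3 v (Poly_Mapping.single m c) = Poly_Mapping.single (m - Poly_Mapping.single v 1)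
        (of_nat (Poly_Mapping.lookup m v) * c)"
  by (subst pderiv3_superset[of "{m}"]) auto

lemma minus_single_add:
  fixes a c :: "var \<Rightarrow>\<^sub>0 nat"
  assumes "Poly_Mapping.lookup c v \<noteq> 0"
  shows "a + (c - Poly_Mapping.single v 1) = a + c - Poly_Mapping.single v 1"
  using assms
  by (intro poly_mapping_eqI) (auto simp: lookup_add lookup_minus lookup_single when_def)

lemma pderiv3_mult_single:
  "pderiv3 v (Poly_Mapping.single a b * Poly_Mapping.single c d) =
    Poly_Mapping.single a b * pderiv3 v (Poly_Mapping.single c d)
    + pderiv3 v (Poly_Mapping.single a b) * (Poly_Mapping.single c d :: 'k::comm_ring_1 poly3)"
proof -
  have 1: "(Poly_Mapping.single (a + (c - Poly_Mapping.single v 1)) (b * (of_nat (Poly_Mapping.lookup c v) * d)) :: 'k poly3)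
     = Poly_Mapping.single (a + c - Poly_Mapping.single v 1) (of_nat (Poly_Mapping.lookup c v) * (b * d))"
  proof (cases "Poly_Mapping.lookup c v = 0")
    case False then show ?thesis by (subst minus_single_add[OF False]) (simp add: ac_simps)
  qed simp
  have 2: "(Poly_Mapping.single (a - Poly_Mapping.single v 1 + c) (of_nat (Poly_Mapping.lookup a v) * b * d) :: 'k poly3)
     = Poly_Mapping.single (a + c - Poly_Mapping.single v 1) (of_nat (Poly_Mapping.lookup a v) * (b * d))"
  proof (cases "Poly_Mapping.lookup a v = 0")
    case False
    have "a - Poly_Mapping.single v 1 + c = a + c - Poly_Mapping.single v 1"
      using minus_single_add[OF False, of c] by (simp add: add.commute)
    then show ?thesis by (simp add: ac_simps)
  qed simp
  show ?thesis
    apply (simp only: mult_single pderiv3_single 1 2 lookup_add of_nat_add single_add[symmetric])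
    apply (simp add: algebra_simps)
    done
qed

lemma pderiv3_mult: "pderiv3 v (f * g) = f * pderiv3 v g + pderiv3 v f * (g :: 'k::comm_ring_1 poly3)"
proof (induction f rule: pm_induct)
  case zero then show ?case by simp
next
  case (add f a b)
  have "pderiv3 v (Poly_Mapping.single a b * g) = Poly_Mapping.single a b * pderiv3 v g + pderiv3 v (Poly_Mapping.single a b) * g"
  proof (induction g rule: pm_induct)
    case zero then show ?case by simp
  next
    case (add g c d)
    then show ?case by (simp add: distrib_left distrib_right pderiv3_add pderiv3_mult_single)
  qed
  with add show ?case by (simp add: distrib_left distrib_right pderiv3_add)
qed

lemma pderiv3_const3 [simp]: "pderiv3 v (const3 c) = 0"
  by (simp add: const3_def pderiv3_single)

lemma pderiv3_Var3: "pderiv3 v (Var3 w) = (if v = w then 1 else 0)"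
  by (simp add: Var3_def pderiv3_single lookup_single when_def)

section \<open>Derivations\<close>

definition der :: "('k::comm_ring_1 poly3 \<Rightarrow> 'k poly3) \<Rightarrow> bool" where
  "der D \<longleftrightarrow> (\<forall>f g. D (f + g) = D f + D g) \<and> (\<forall>f g. D (f * g) = f * D g + D f * g)
     \<and> (\<forall>c. D (const3 c) = 0)"

context
  fixes D :: "'k::comm_ring_1 poly3 \<Rightarrow> 'k poly3"
  assumes D: "der D"
begin
lemma der_add: "D (f + g) = D f + D g" using D by (simp add: der_def)
lemma der_mult: "D (f * g) = f * D g + D f * g" using D by (simp add: der_def)
lemma der_const: "D (const3 c) = 0" using D by (simp add: der_def)
lemma der_zero: "D 0 = 0" using der_const[of 0] by simp
lemma der_one: "D 1 = 0" using der_const[of 1] by simp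
lemma der_uminus: "D (- f) = - D f"
  using der_add[of f "- f"] der_zero by (simp add: eq_neg_iff_add_eq_0 add.commute)
lemma der_diff: "D (f - g) = D f - D g"
  using der_add[of f "- g"] der_uminus[of g] by simp
lemma der_numeral: "D (numeral n) = 0" using der_const[of "numeral n"] by (simp add: const3_numeral)
lemma der_of_nat: "D (of_nat n) = 0" using der_const[of "of_nat n"] by (simp add: const3_of_nat)
lemma der_cmult: "D a = 0 \<Longrightarrow> D (a * f) = a * D f" by (simp add: der_mult)
lemma der_pow: "D (f ^ Suc n) = of_nat (Suc n) * f ^ n * D f"
  by (induction n) (simp_all add: der_mult algebra_simps)
lemma der_pow2: "D (f ^ 2) = 2 * f * D f"
  using der_pow[of f 1] by (simp add: numeral_2_eq_2)
lemma der_pow3: "D (f ^ 3) = 3 * f ^ 2 * D f"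
  using der_pow[of f 2] by (simp add: numeral_3_eq_3 numeral_2_eq_2)
lemma der_pow_mult: "D (f ^ n) * f = of_nat n * f ^ n * D f"
proof (cases n)
  case 0 then show ?thesis by (simp add: der_one)
next
  case (Suc m) then show ?thesis unfolding Suc der_pow by (simp add: algebra_simps)
qed
end

lemmas der_simps = der_add der_mult der_const der_zero der_one der_uminus der_diff der_numeral der_of_nat
  der_pow2 der_pow3

lemma der_eqI:
  assumes "der D1" "der D2" "\<And>v. D1 (Var3 v) = D2 (Var3 v)"
  shows "D1 f = D2 (f :: 'k::comm_ring_1 poly3)"
  by (induction f rule: poly3_gen) (use assms in \<open>simp_all add: der_simps\<close>)

lemma der_pderiv3: "der (pderiv3 v)"
  by (simp add: der_def pderiv3_add pderiv3_mult)

lemma der_scale: "der D \<Longrightarrow> der (\<lambda>f. a * D f)"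
  by (simp add: der_def algebra_simps)

lemma der_plus: "der D1 \<Longrightarrow> der D2 \<Longrightarrow> der (\<lambda>f. D1 f + D2 f)"
  by (simp add: der_def algebra_simps)

lemma der_comm: "der D1 \<Longrightarrow> der D2 \<Longrightarrow> der (\<lambda>f. D1 (D2 f) - D2 (D1 f))"
  unfolding der_def[of "\<lambda>f. D1 (D2 f) - D2 (D1 f)"]
  by (simp add: der_add der_mult der_const der_zero algebra_simps)

abbreviation "X2 \<equiv> Var3 E2"
abbreviation "X4 \<equiv> Var3 E4"
abbreviation "X6 \<equiv> Var3 E6"
abbreviation "c12 \<equiv> const3 (1/12)"

lemma der_ramanujan: "der (ramanujan :: 'k::field poly3 \<Rightarrow> _)"
proof -
  have "der (\<lambda>f. ((const3 (1/12) * (X2 ^ 2 - X4)) * pderiv3 E2 f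
    + (const3 (1/3) * (X2 * X4 - X6)) * pderiv3 E4 f) + (const3 (1/2) * (X2 * X6 - X4 ^ 2)) * pderiv3 E6 (f :: 'k poly3))"
    by (intro der_plus der_scale der_pderiv3)
  then show ?thesis unfolding ramanujan_def[abs_def] by (simp add: mult.assoc)
qed

lemma twelve_nz:
  assumes "(2::'k::field) \<noteq> 0" "(3::'k) \<noteq> 0"
  shows "(12::'k) \<noteq> 0"
proof -
  have "(12::'k) = 2 * 2 * 3" by simp
  then show ?thesis using assms by (metis mult_eq_0_iff)
qed

lemma ramanujan_alt:
  assumes "(2::'k::field) \<noteq> 0" "(3::'k) \<noteq> 0"
  shows "ramanujan (f :: 'k poly3) = c12 * ((X2^2 - X4) * pderiv3 E2 f + 4 * (X2 * X4 - X6) * pderiv3 E4 f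
     + 6 * (X2 * X6 - X4^2) * pderiv3 E6 f)"
proof -
  have a': "(1/3::'k) = 4 * (1/12)" "(1/2::'k) = 6 * (1/12)" using assms twelve_nz[OF assms] by (simp_all add: field_simps)
  have a: "const3 (1/3) = 4 * (c12 :: 'k poly3)"
    unfolding a' const3_mult const3_numeral ..
  have b: "const3 (1/2) = 6 * (c12 :: 'k poly3)"
    unfolding a' const3_mult const3_numeral ..
  show ?thesis unfolding ramanujan_def a b by (simp add: algebra_simps)
qed

section \<open>The sl2 commutation relations\<close>

definition Hd :: "'k::field poly3 \<Rightarrow> 'k poly3" where
  "Hd f = c12 * (2 * X2 * pderiv3 E2 f + 4 * X4 * pderiv3 E4 f + 6 * X6 * pderiv3 E6 f)"

lemma der_Hd: "der (Hd :: 'k::field poly3 \<Rightarrow> _)"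
proof -
  have "der (\<lambda>f::'k poly3. c12 * ((2 * X2 * pderiv3 E2 f + 4 * X4 * pderiv3 E4 f) + 6 * X6 * pderiv3 E6 f))"
    by (intro der_plus der_scale der_pderiv3)
  then show ?thesis unfolding Hd_def[abs_def] by (simp add: mult.assoc)
qed

context
  fixes dummy :: "'k::field itself"
  assumes two: "(2::'k) \<noteq> 0" and three: "(3::'k) \<noteq> 0"
begin

lemmas R_alt = ramanujan_alt[OF two three]

lemma comm_WR: "pderiv3 E2 (ramanujan f) = ramanujan (pderiv3 E2 f) + Hd (f :: 'k poly3)"
proof -
  have "pderiv3 E2 (ramanujan f) - ramanujan (pderiv3 E2 f) = Hd (f :: 'k poly3)"
  proof (rule der_eqI[where ?D1.0="\<lambda>f. pderiv3 E2 (ramanujan f) - ramanujan (pderiv3 E2 f)"])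
    show "der (\<lambda>f::'k poly3. pderiv3 E2 (ramanujan f) - ramanujan (pderiv3 E2 f))"
      by (intro der_comm der_pderiv3 der_ramanujan)
    show "der (Hd :: 'k poly3 \<Rightarrow> _)" by (rule der_Hd)
    fix v show "pderiv3 E2 (ramanujan (Var3 v)) - ramanujan (pderiv3 E2 (Var3 v)) = Hd (Var3 v :: 'k poly3)"
      by (cases v) (simp_all add: R_alt Hd_def der_simps[OF der_pderiv3] pderiv3_Var3 algebra_simps power2_eq_square)
  qed
  then show ?thesis by (simp add: algebra_simps)
qed

lemma comm_HR: "Hd (ramanujan f) = ramanujan (Hd f) + 2 * c12 * ramanujan (f :: 'k poly3)"
proof -
  have "Hd (ramanujan f) - ramanujan (Hd f) = 2 * c12 * ramanujan (f :: 'k poly3)"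
  proof (rule der_eqI[where ?D1.0="\<lambda>f. Hd (ramanujan f) - ramanujan (Hd f)"])
    show "der (\<lambda>f::'k poly3. Hd (ramanujan f) - ramanujan (Hd f))"
      by (intro der_comm der_Hd der_ramanujan)
    show "der (\<lambda>f::'k poly3. 2 * c12 * ramanujan f)" by (intro der_scale der_ramanujan)
    fix v show "Hd (ramanujan (Var3 v)) - ramanujan (Hd (Var3 v)) = 2 * c12 * ramanujan (Var3 v :: 'k poly3)"
      by (cases v) (simp_all add: R_alt Hd_def der_simps[OF der_pderiv3] pderiv3_Var3 algebra_simps power2_eq_square)
  qed
  then show ?thesis by (simp add: algebra_simps)
qed


lemma Rn_add: "(ramanujan ^^ n) (f + g) = (ramanujan ^^ n) f + (ramanujan ^^ n) (g :: 'k::field poly3)"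
  by (induction n) (simp_all add: der_add[OF der_ramanujan])

lemma Rn_cmult: "ramanujan a = 0 \<Longrightarrow> (ramanujan ^^ n) (a * f) = a * (ramanujan ^^ n) (f :: 'k::field poly3)"
  by (induction n) (simp_all add: der_cmult[OF der_ramanujan])

lemma R_const_nat: "ramanujan (c12 * of_nat k) = (0 :: 'k::field poly3)" "ramanujan (of_nat k) = (0 :: 'k::field poly3)"
  "ramanujan (2 * c12 * of_nat k) = (0 :: 'k::field poly3)"
  by (simp_all add: der_simps[OF der_ramanujan])

lemma H_iter: "Hd ((ramanujan ^^ n) f) = (ramanujan ^^ n) (Hd f) + 2 * c12 * of_nat n * (ramanujan ^^ n) (f :: 'k::field poly3)"
proof (induction n)
  case 0 then show ?case by simp
next
  case (Suc n)
  have "Hd ((ramanujan ^^ Suc n) f) = ramanujan (Hd ((ramanujan ^^ n) f)) + 2 * c12 * (ramanujan ^^ Suc n) f"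
    by (simp add: comm_HR)
  also have "\<dots> = (ramanujan ^^ Suc n) (Hd f) + 2 * c12 * of_nat n * (ramanujan ^^ Suc n) f + 2 * c12 * (ramanujan ^^ Suc n) f"
    using Suc by (simp add: der_add[OF der_ramanujan] der_cmult[OF der_ramanujan] der_simps[OF der_ramanujan])
  finally show ?case by (simp add: algebra_simps)
qed

lemma W_iter: "pderiv3 E2 ((ramanujan ^^ Suc n) f) = (ramanujan ^^ Suc n) (pderiv3 E2 f)
   + of_nat (Suc n) * (ramanujan ^^ n) (Hd f) + c12 * of_nat (Suc n * n) * (ramanujan ^^ n) (f :: 'k::field poly3)"
proof (induction n)
  case 0 then show ?case by (simp add: comm_WR)
next
  case (Suc n)
  have "pderiv3 E2 ((ramanujan ^^ Suc (Suc n)) f) = ramanujan (pderiv3 E2 ((ramanujan ^^ Suc n) f)) + Hd ((ramanujan ^^ Suc n) f)"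
    by (simp add: comm_WR)
  also have "\<dots> = (ramanujan ^^ Suc (Suc n)) (pderiv3 E2 f) + of_nat (Suc n) * (ramanujan ^^ Suc n) (Hd f)
     + c12 * of_nat (Suc n * n) * (ramanujan ^^ Suc n) f
     + ((ramanujan ^^ Suc n) (Hd f) + 2 * c12 * of_nat (Suc n) * (ramanujan ^^ Suc n) f)"
    unfolding Suc H_iter
    by (simp add: der_add[OF der_ramanujan] der_cmult[OF der_ramanujan] der_simps[OF der_ramanujan])
  finally show ?case by (simp add: algebra_simps)
qed

end

section \<open>Evaluation at the cusp point (1,1,1) and a point derivation\<close>

definition ev :: "'k::comm_ring_1 poly3 \<Rightarrow> 'k" where
  "ev f = sum (Poly_Mapping.lookup f) (Poly_Mapping.keys f)"

lemma ev_superset: "finite S \<Longrightarrow> Poly_Mapping.keys f \<subseteq> S \<Longrightarrow> ev f = sum (Poly_Mapping.lookup f) S"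
  unfolding ev_def by (rule sum.mono_neutral_left) (auto simp: in_keys_iff)

lemma ev_add: "ev (f + g) = ev f + ev g"
proof -
  let ?S = "Poly_Mapping.keys f \<union> Poly_Mapping.keys g"
  have "Poly_Mapping.keys (f + g) \<subseteq> ?S" by (rule keys_add)
  then show ?thesis
    by (simp add: ev_superset[of ?S] lookup_add sum.distrib)
qed

lemma ev_zero [simp]: "ev 0 = 0" by (simp add: ev_def)

lemma ev_single [simp]: "ev (Poly_Mapping.single m c) = c"
  by (subst ev_superset[of "{m}"]) auto

lemma ev_mult: "ev (f * g) = ev f * ev (g :: 'k::comm_ring_1 poly3)"
proof (induction f rule: pm_induct)
  case zero then show ?case by simp
next
  case (add f a b)
  have "ev (Poly_Mapping.single a b * g) = b * ev g"
  proof (induction g rule: pm_induct)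
    case zero then show ?case by simp
  next
    case (add g c d)
    then show ?case by (simp add: distrib_left ev_add mult_single)
  qed
  with add show ?case by (simp add: distrib_right ev_add)
qed

lemma ev_const3 [simp]: "ev (const3 c) = c" by (simp add: const3_def)
lemma ev_Var3 [simp]: "ev (Var3 v) = 1" by (simp add: Var3_def)
lemma ev_one [simp]: "ev 1 = 1" using ev_const3[of 1] by simp
lemma ev_numeral [simp]: "ev (numeral n) = numeral n" using ev_const3[of "numeral n"] by (simp add: const3_numeral)
lemma ev_of_nat [simp]: "ev (of_nat n) = of_nat n" using ev_const3[of "of_nat n"] by (simp add: const3_of_nat)
lemma ev_uminus: "ev (- f) = - ev f"
  using ev_add[of f "- f"] by (simp add: eq_neg_iff_add_eq_0 add.commute)
lemma ev_diff: "ev (f - g) = ev f - ev g"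
  using ev_add[of f "- g"] ev_uminus[of g] by simp
lemma ev_pow: "ev (f ^ n) = ev f ^ n"
  by (induction n) (simp_all add: ev_mult)

lemmas ev_simps = ev_add ev_mult ev_uminus ev_diff ev_pow

lemma ev_R: "ev (ramanujan f) = (0 :: 'k::field)"
  by (simp add: ramanujan_def ev_simps)

definition pt_der :: "('k::comm_ring_1 poly3 \<Rightarrow> 'k) \<Rightarrow> bool" where
  "pt_der L \<longleftrightarrow> (\<forall>f g. L (f + g) = L f + L g) \<and> (\<forall>f g. L (f * g) = ev f * L g + L f * ev g)
     \<and> (\<forall>c. L (const3 c) = 0)"

context
  fixes L :: "'k::comm_ring_1 poly3 \<Rightarrow> 'k"
  assumes L: "pt_der L"
begin
lemma pt_add: "L (f + g) = L f + L g" using L by (simp add: pt_der_def)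
lemma pt_mult: "L (f * g) = ev f * L g + L f * ev g" using L by (simp add: pt_der_def)
lemma pt_const: "L (const3 c) = 0" using L by (simp add: pt_der_def)
lemma pt_zero: "L 0 = 0" using pt_const[of 0] by simp
lemma pt_one: "L 1 = 0" using pt_const[of 1] by simp
lemma pt_uminus: "L (- f) = - L f"
  using pt_add[of f "- f"] pt_zero by (simp add: eq_neg_iff_add_eq_0 add.commute)
lemma pt_diff: "L (f - g) = L f - L g"
  using pt_add[of f "- g"] pt_uminus[of g] by simp
lemma pt_numeral: "L (numeral n) = 0" using pt_const[of "numeral n"] by (simp add: const3_numeral)
lemma pt_pow: "L (f ^ Suc n) = of_nat (Suc n) * ev f ^ n * L f"
  by (induction n) (simp_all add: pt_mult ev_pow ev_mult algebra_simps)
lemma pt_pow2: "L (f ^ 2) = 2 * ev f * L f"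
  using pt_pow[of f 1] by (simp add: numeral_2_eq_2)
lemma pt_pow3: "L (f ^ 3) = 3 * ev f ^ 2 * L f"
  using pt_pow[of f 2] by (simp add: numeral_3_eq_3 numeral_2_eq_2)
end

lemmas pt_simps = pt_add pt_mult pt_const pt_zero pt_one pt_uminus pt_diff pt_numeral pt_pow2 pt_pow3

lemma pt_der_eqI:
  assumes "pt_der L1" "pt_der L2" "\<And>v. L1 (Var3 v) = L2 (Var3 v)"
  shows "L1 f = L2 (f :: 'k::comm_ring_1 poly3)"
  by (induction f rule: poly3_gen) (use assms in \<open>simp_all add: pt_simps\<close>)

definition ell :: "'k::comm_ring_1 poly3 \<Rightarrow> 'k" where
  "ell f = ev (pderiv3 E2 f) - 10 * ev (pderiv3 E4 f) + 21 * ev (pderiv3 E6 f)"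

lemma pt_der_ell: "pt_der ell"
  unfolding pt_der_def ell_def
  by (simp add: pderiv3_add pderiv3_mult ev_simps algebra_simps)

lemma ell_Var3 [simp]: "ell X2 = 1" "ell X4 = -10" "ell X6 = 21"
  by (simp_all add: ell_def pderiv3_Var3)

lemma pt_der_ellR: "pt_der (\<lambda>f. ell (ramanujan f :: 'k::field poly3))"
  unfolding pt_der_def
  by (simp add: der_simps[OF der_ramanujan] pt_simps[OF pt_der_ell] ev_R)

lemma ell_R:
  assumes two: "(2::'k::field) \<noteq> 0" and three: "(3::'k) \<noteq> 0"
  shows "ell (ramanujan f) = ell (f :: 'k poly3)"
proof (rule pt_der_eqI[OF pt_der_ellR pt_der_ell])
  have 12: "(12::'k) \<noteq> 0" by (rule twelve_nz[OF two three])
  fix v show "ell (ramanujan (Var3 v)) = ell (Var3 v :: 'k poly3)"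
    using 12
    apply (cases v)
      apply (simp_all add: ramanujan_alt[OF two three] pt_simps[OF pt_der_ell] ev_simps pderiv3_Var3)
    done
qed

lemma ell_Rn:
  assumes two: "(2::'k::field) \<noteq> 0" and three: "(3::'k) \<noteq> 0"
  shows "ell ((ramanujan ^^ n) f) = ell (f :: 'k poly3)"
  by (induction n) (simp_all add: ell_R[OF two three])

section \<open>Discriminant and localization\<close>

lemma W_disc: "pderiv3 E2 (disc3 :: 'k::field poly3) = 0"
  by (simp add: disc3_def der_simps[OF der_pderiv3] pderiv3_Var3)

lemma W_disc_pow: "pderiv3 E2 ((disc3 :: 'k::field poly3) ^ m) = 0"
  by (cases m) (simp_all add: der_pow[OF der_pderiv3] der_one[OF der_pderiv3] W_disc del: power_Suc)

lemma ell_disc: "ell (disc3 :: 'k::field poly3) = - 72"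
  by (simp add: disc3_def pt_simps[OF pt_der_ell] ev_simps)

lemma Rloc_iter: "(ramanujan_loc ^^ n) (P, 0) = ((ramanujan ^^ n) P * disc3 ^ n, n :: nat)"
  for P :: "'k::field poly3"
proof (induction n)
  case 0 then show ?case by simp
next
  case (Suc n)
  have aux: "ramanujan (P' * disc3 ^ n) * disc3 = P' * (of_nat n * disc3 ^ n * ramanujan disc3)
        + ramanujan P' * disc3 ^ Suc n" for P' :: "'k poly3"
  proof -
    have h: "ramanujan (disc3 ^ n) * disc3 = of_nat n * disc3 ^ n * ramanujan (disc3 :: 'k poly3)"
      by (rule der_pow_mult[OF der_ramanujan])
    have "ramanujan (P' * disc3 ^ n) * disc3 = P' * (ramanujan (disc3 ^ n) * disc3) + ramanujan P' * disc3 ^ Suc n"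
      by (simp add: der_mult[OF der_ramanujan] algebra_simps)
    then show ?thesis unfolding h .
  qed
  have "(ramanujan_loc ^^ Suc n) (P, 0) = ramanujan_loc ((ramanujan ^^ n) P * disc3 ^ n, n)"
    using Suc.IH by simp
  also have "\<dots> = ((ramanujan ^^ Suc n) P * disc3 ^ Suc n, Suc n)"
    unfolding ramanujan_loc_def fst_conv snd_conv aux by (simp add: algebra_simps)
  finally show ?case .
qed

theorem corollary2p5:
  fixes p :: nat
  assumes "CHAR('k::field) = p" and "p \<ge> 5"
  shows "\<not> (\<exists>g :: 'k locfun. \<forall>a :: 'k locfun.
            loc_eq ((ramanujan_loc ^^ p) a) (loc_mul g (ramanujan_loc a)))"
proof
  assume "\<exists>g :: 'k locfun. \<forall>a :: 'k locfun.
            loc_eq ((ramanujan_loc ^^ p) a) (loc_mul g (ramanujan_loc a))"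
  then obtain G m where hyp: "\<And>a :: 'k locfun. loc_eq ((ramanujan_loc ^^ p) a) (loc_mul (G, m) (ramanujan_loc a))"
    by auto
  have nz: "(of_nat n :: 'k) \<noteq> 0" if "0 < n" "n < 5" for n
  proof
    assume "(of_nat n :: 'k) = 0"
    then have "p dvd n" using assms(1) by (simp add: of_nat_eq_0_iff_char_dvd)
    then show False using that assms(2) by (auto dest: dvd_imp_le)
  qed
  have two: "(2::'k) \<noteq> 0" using nz[of 2] by simp
  have three: "(3::'k) \<noteq> 0" using nz[of 3] by simp
  have "(72::'k) = 2 * 2 * 2 * 3 * 3" by simp
  then have s72: "(72::'k) \<noteq> 0" using two three by (metis mult_eq_0_iff)
  have disc_nz: "(disc3 :: 'k poly3) \<noteq> 0"
  proof
    assume "(disc3 :: 'k poly3) = 0"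
    then have "ell (disc3 :: 'k poly3) = 0" using pt_zero[OF pt_der_ell] by simp
    moreover have "ell (disc3 :: 'k poly3) = - 72" by (rule ell_disc)
    ultimately show False using s72 by simp
  qed
  have p0: "(of_nat p :: 'k poly3) = 0"
  proof -
    have "(of_nat p :: 'k) = 0" using assms(1) by (metis of_nat_CHAR)
    then show ?thesis by (simp add: const3_of_nat[symmetric])
  qed
  obtain n where pn: "p = Suc n" using assms(2) by (cases p) auto
  have key: "(ramanujan ^^ p) P * disc3 ^ m = G * ramanujan P" for P :: "'k poly3"
  proof -
    have "loc_eq ((ramanujan_loc ^^ p) (P, 0)) (loc_mul (G, m) (ramanujan_loc (P, 0)))" by (rule hyp)
    then have "(ramanujan ^^ p) P * disc3 ^ p * disc3 ^ Suc m = G * (ramanujan P * disc3) * disc3 ^ p"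
      by (simp add: Rloc_iter loc_eq_def loc_mul_def ramanujan_loc_def)
    then have "((ramanujan ^^ p) P * disc3 ^ m - G * ramanujan P) * disc3 ^ Suc p = 0"
      by (simp add: algebra_simps)
    then show ?thesis using disc_nz by simp
  qed
  have WRp: "pderiv3 E2 ((ramanujan ^^ p) P) = (ramanujan ^^ p) (pderiv3 E2 P)" for P :: "'k poly3"
  proof -
    have p0': "(of_nat (Suc n) :: 'k poly3) = 0" using p0 pn by simp
    show ?thesis
      using W_iter[OF two three, of n P] unfolding pn of_nat_mult p0' by simp
  qed
  have lin: "G * Hd P + pderiv3 E2 G * ramanujan P = 0" for P :: "'k poly3"
  proof -
    have "pderiv3 E2 ((ramanujan ^^ p) P * disc3 ^ m) = pderiv3 E2 (G * ramanujan P)"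
      using key by simp
    then have "(ramanujan ^^ p) (pderiv3 E2 P) * disc3 ^ m = G * (ramanujan (pderiv3 E2 P) + Hd P) + pderiv3 E2 G * ramanujan P"
      by (simp add: der_mult[OF der_pderiv3] WRp W_disc_pow comm_WR[OF two three] algebra_simps)
    then show ?thesis using key[of "pderiv3 E2 P"] by (simp add: algebra_simps)
  qed
  define a1 b1 a2 b2 where "a1 = (c12 * (X2^2 - X4) :: 'k poly3)" and "b1 = (c12 * (2 * X2) :: 'k poly3)"
    and "a2 = (c12 * (4 * (X2 * X4 - X6)) :: 'k poly3)" and "b2 = (c12 * (4 * X4) :: 'k poly3)"
  have e1: "G * b1 + pderiv3 E2 G * a1 = 0"
    using lin[of X2] by (simp add: a1_def b1_def Hd_def ramanujan_alt[OF two three] pderiv3_Var3)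
  have e2: "G * b2 + pderiv3 E2 G * a2 = 0"
    using lin[of X4] by (simp add: a2_def b2_def Hd_def ramanujan_alt[OF two three] pderiv3_Var3 algebra_simps)
  have "G * (b1 * a2 - b2 * a1) = a2 * (G * b1 + pderiv3 E2 G * a1) - a1 * (G * b2 + pderiv3 E2 G * a2)"
    by (simp add: algebra_simps)
  then have GQ: "G * (b1 * a2 - b2 * a1) = 0" using e1 e2 by simp
  have Qeq: "b1 * a2 - b2 * a1 = (c12 * c12 * 4) * (X2^2 * X4 - 2 * X2 * X6 + X4^2)"
    by (simp add: a1_def b1_def a2_def b2_def algebra_simps power2_eq_square)
  have ellQ: "ell (b1 * a2 - b2 * a1) = (1/12) * (1/12) * 4 * (-72 :: 'k)"
    unfolding Qeq by (simp add: pt_simps[OF pt_der_ell] ev_simps)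
  have "(4::'k) = 2 * 2" by simp
  then have s4: "(4::'k) \<noteq> 0" using two by (metis mult_eq_0_iff)
  have "ell (b1 * a2 - b2 * a1) \<noteq> 0"
    unfolding ellQ
    by (simp only: mult_eq_0_iff divide_eq_0_iff neg_equal_0_iff_equal de_Morgan_disj)
      (use twelve_nz[OF two three] s4 s72 in simp)
  then have "b1 * a2 - b2 * a1 \<noteq> 0" using pt_zero[OF pt_der_ell] by auto
  then have G0: "G = 0" using GQ by simp
  have "(ramanujan ^^ p) X2 = (0 :: 'k poly3)"
    using key[of X2] G0 disc_nz by simp
  moreover have "ell ((ramanujan ^^ p) X2) = (1 :: 'k)"
    by (simp add: ell_Rn[OF two three])
  moreover have "ell (0 :: 'k poly3) = 0" by (rule pt_zero[OF pt_der_ell])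
  ultimately show False by simp
qed

end
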